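(* $T^2\Lambda=\Xi_2\oplus(l-\psi)T\Lambda$ (internal direct sum).
   Context: Let $l$ be an odd prime, $\Lambda=\mathbb{Z}_l[[T]]$, and let $\psi$ be the continuous $\mathbb{Z}_l$-algebra endomorphism of $\Lambda$ with $\psi(T)=(1+T)^l-1$; $(l-\psi)x=lx-\psi(x)$. Let $\Lambda_\wedge=\{\sum_{k\in\mathbb{Z}}x_kT^k: x_k\in\mathbb{Z}_l,\ x_k\to0 \text{ as } k\to-\infty\}$, $\Xi=\{\sum_k x_kT^k\in\Lambda_\wedge: x_k=0 \text{ whenever } l\mid k\}$, and for $s\in\mathbb{Z}$, $\Xi_s=\{\sum_{k\ge s}x_kT^k\in\Xi\}$. Thus $\Xi_2$ consists of power series $\sum_{k\ge2,\,l\nmid k}x_kT^k\in\Lambda$. *)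

theory Defs
  imports "HOL-Computational_Algebra.Formal_Power_Series"
begin

text \<open>l-adic integers Z_l, realised as the inverse limit of Z/l^n Z:
  an element is a compatible sequence a with a n in [0, l^n) and
  a (n+1) mod l^n = a n (a n is the residue mod l^n).\<close>

type_synonym zl = "nat \<Rightarrow> int"

definition zl_set :: "nat \<Rightarrow> zl set" where
  "zl_set l = {a. \<forall>n. 0 \<le> a n \<and> a n < int l ^ n \<and> a (Suc n) mod int l ^ n = a n}"

text \<open>Lambda = Z_l[[T]]: an element x is its coefficient sequence, x k in Z_l being
  the coefficient of T^k.\<close>

type_synonym lam = "nat \<Rightarrow> zl"

definition lam_set :: "nat \<Rightarrow> lam set" where
  "lam_set l = {x. \<forall>k. x k \<in> zl_set l}"

definition level :: "lam \<Rightarrow> nat \<Rightarrow> int fps" where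
  "level x n = Abs_fps (\<lambda>k. x k n)"

definition of_levels :: "nat \<Rightarrow> (nat \<Rightarrow> int fps) \<Rightarrow> lam" where
  "of_levels l F = (\<lambda>k n. fps_nth (F n) k mod int l ^ n)"

definition lam_zero :: lam where
  "lam_zero = (\<lambda>k n. 0)"

definition lam_add :: "nat \<Rightarrow> lam \<Rightarrow> lam \<Rightarrow> lam" where
  "lam_add l x y = of_levels l (\<lambda>n. level x n + level y n)"

definition lam_mul :: "nat \<Rightarrow> lam \<Rightarrow> lam \<Rightarrow> lam" where
  "lam_mul l x y = of_levels l (\<lambda>n. level x n * level y n)"

definition lam_T :: "nat \<Rightarrow> lam" where
  "lam_T l = of_levels l (\<lambda>n. fps_X)"

text \<open>psi: the continuous Z_l-algebra endomorphism with psi(T) = (1+T)^l - 1,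
  i.e. psi x = x((1+T)^l - 1) (formal composition, well defined since
  (1+T)^l - 1 has zero constant term).\<close>
definition lam_psi :: "nat \<Rightarrow> lam \<Rightarrow> lam" where
  "lam_psi l x = of_levels l (\<lambda>n. fps_compose (level x n) ((1 + fps_X) ^ l - 1))"

definition lam_l_minus_psi :: "nat \<Rightarrow> lam \<Rightarrow> lam" where
  "lam_l_minus_psi l x =
     of_levels l (\<lambda>n. fps_const (int l) * level x n - fps_compose (level x n) ((1 + fps_X) ^ l - 1))"

text \<open>Xi_s intersected with Lambda for s \<ge> 0: power series sum_{k \<ge> s, l not dividing k} x_k T^k.\<close>
definition Xi :: "nat \<Rightarrow> nat \<Rightarrow> lam set" where
  "Xi l s = {x \<in> lam_set l. \<forall>k. (k < s \<or> l dvd k) \<longrightarrow> x k = (\<lambda>n. 0)}"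

definition T2Lam :: "nat \<Rightarrow> lam set" where
  "T2Lam l = {lam_mul l (lam_mul l (lam_T l) (lam_T l)) y | y. y \<in> lam_set l}"

definition LpsiTLam :: "nat \<Rightarrow> lam set" where
  "LpsiTLam l = {lam_l_minus_psi l (lam_mul l (lam_T l) y) | y. y \<in> lam_set l}"

end

theory Submission imports Defs "HOL-Computational_Algebra.Primes"
begin
unbundle fps_syntax

definition cg :: "int \<Rightarrow> int fps \<Rightarrow> int fps \<Rightarrow> bool" where
  "cg c f g \<longleftrightarrow> (\<forall>k. c dvd (f $ k - g $ k))"

lemma cg_refl[simp]: "cg c f f" by (simp add: cg_def)
lemma cg_sym: "cg c f g \<Longrightarrow> cg c g f"
  unfolding cg_def by (metis dvd_minus_iff minus_diff_eq)
lemma cg_trans: "cg c f g \<Longrightarrow> cg c g h \<Longrightarrow> cg c f h"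
  unfolding cg_def by (metis diff_add_cancel dvd_add add_diff_eq diff_diff_eq2)
lemma cg_add: "cg c f g \<Longrightarrow> cg c f' g' \<Longrightarrow> cg c (f + f') (g + g')"
  unfolding cg_def by (simp add: dvd_add add_diff_add)
lemma cg_iff_dvd: "cg c f g \<longleftrightarrow> fps_const c dvd (f - g)"
proof
  assume "cg c f g"
  then have "\<forall>k. (f - g) $ k = c * ((f - g) $ k div c)" unfolding cg_def by simp
  then have "f - g = fps_const c * Abs_fps (\<lambda>k. (f - g) $ k div c)"
    by (intro fps_ext) simp
  then show "fps_const c dvd (f - g)" by (metis dvdI)
next
  assume "fps_const c dvd (f - g)"
  then obtain h where "f - g = fps_const c * h" by (auto elim: dvdE)
  then have "(f - g) $ k = c * h $ k" for k by simp
  then show "cg c f g" unfolding cg_def by simp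
qed
lemma cg_diff: "cg c f g \<Longrightarrow> cg c f' g' \<Longrightarrow> cg c (f - f') (g - g')"
proof -
  assume a: "cg c f g" "cg c f' g'"
  have "(f - f') - (g - g') = (f - g) - (f' - g')" by (simp add: algebra_simps)
  then show ?thesis using a unfolding cg_iff_dvd by (metis dvd_diff)
qed
lemma cg_mult: "cg c f g \<Longrightarrow> cg c f' g' \<Longrightarrow> cg c (f * f') (g * g')"
proof -
  assume a: "cg c f g" "cg c f' g'"
  have "f * f' - g * g' = f * (f' - g') + (f - g) * g'" by (simp add: algebra_simps)
  then show ?thesis using a unfolding cg_iff_dvd by (simp add: dvd_add)
qed
lemma cg_power: "cg c f g \<Longrightarrow> cg c (f ^ i) (g ^ i)"
  by (induction i) (auto intro: cg_mult)
lemma cg_dvd: "cg c f g \<Longrightarrow> d dvd c \<Longrightarrow> cg d f g"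
  unfolding cg_def using dvd_trans by blast
lemma cg_shift: "cg c f g \<Longrightarrow> cg c (fps_shift n f) (fps_shift n g)"
  unfolding cg_def by simp
lemma cg_zero_iff: "cg c f 0 \<longleftrightarrow> (\<forall>k. c dvd f $ k)" unfolding cg_def by simp
lemma cg_cmult: "cg c (fps_const c * f) 0" unfolding cg_def by simp
lemma cg_compose_left: "cg c f g \<Longrightarrow> cg c (f oo h) (g oo h)"
  unfolding cg_def fps_compose_nth
  by (simp add: sum_subtractf[symmetric] left_diff_distrib[symmetric] dvd_sum)
lemma cg_compose_right: "cg c f g \<Longrightarrow> cg c (h oo f) (h oo g)"
proof -
  assume a: "cg c f g"
  have "cg c (f ^ i) (g ^ i)" for i using a by (rule cg_power)
  then show ?thesis
  unfolding cg_def fps_compose_nth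
  by (simp add: sum_subtractf[symmetric] right_diff_distrib[symmetric] dvd_sum)
qed

lemma compose_const_mult: "(fps_const c * f) oo h = fps_const c * (f oo h)"
  by (intro fps_ext) (simp add: fps_compose_nth sum_distrib_left algebra_simps)

lemma one_plus_X_power_nth: "((1 + fps_X :: int fps) ^ n) $ k = int (n choose k)"
proof (induction n arbitrary: k)
  case 0 then show ?case by simp
next
  case (Suc n)
  have "(1 + fps_X :: int fps) ^ Suc n = (1 + fps_X) ^ n + fps_X * (1 + fps_X) ^ n"
    by (simp add: algebra_simps)
  then show ?case using Suc by (cases k) auto
qed

definition PP :: "nat \<Rightarrow> int fps" where "PP l = (1 + fps_X) ^ l - 1"
definition Phi :: "nat \<Rightarrow> int fps \<Rightarrow> int fps" where
  "Phi l g = fps_const (int l) * g - (g oo PP l)"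
definition SS :: "nat \<Rightarrow> int fps \<Rightarrow> int fps" where
  "SS l y = Abs_fps (\<lambda>k. if l dvd k \<and> k \<noteq> 0 then y $ (k div l - 1) else 0)"

lemma PP_nth: "PP l $ k = int (l choose k) - (if k = 0 then 1 else 0)"
  by (simp add: PP_def one_plus_X_power_nth)

lemma cg_PP: assumes "prime l" shows "cg (int l) (PP l) (fps_X ^ l)"
  unfolding cg_def
proof
  fix k
  have l0: "l \<noteq> 0" using assms by auto
  show "int l dvd PP l $ k - (fps_X ^ l :: int fps) $ k"
  proof (cases "k = 0 \<or> k \<ge> l")
    case True
    then show ?thesis using l0 by (auto simp: PP_nth binomial_eq_0)
  next
    case False
    then have "l dvd (l choose k)" using dvd_choose_prime[of k l] assms l0 by auto
    then show ?thesis using False by (auto simp: PP_nth)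
  qed
qed

lemma Phi_diff: "Phi l (f - g) = Phi l f - Phi l g"
  by (simp add: Phi_def fps_compose_sub_distrib algebra_simps)
lemma Phi_add: "Phi l (f + g) = Phi l f + Phi l g"
  by (simp add: Phi_def fps_compose_add_distrib algebra_simps)
lemma Phi_cmult: "Phi l (fps_const c * f) = fps_const c * Phi l f"
  unfolding Phi_def compose_const_mult by (simp add: right_diff_distrib mult.left_commute)
lemma Phi_zero[simp]: "Phi l 0 = 0"
  using Phi_cmult[of l 0 0] by simp
lemma cg_Phi: assumes "cg c f g" shows "cg c (Phi l f) (Phi l g)"
proof -
  from assms obtain h where "f - g = fps_const c * h" unfolding cg_iff_dvd by (auto elim: dvdE)
  then have "Phi l f - Phi l g = fps_const c * Phi l h" by (metis Phi_diff Phi_cmult)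
  then show ?thesis unfolding cg_iff_dvd by simp
qed

lemma compose_Xpow_nth: assumes "l > 0"
  shows "(g oo fps_X ^ l) $ k = (if l dvd k then g $ (k div l) else 0)"
proof -
  have "(g oo fps_X ^ l) $ k = (\<Sum>i\<in>{0..k}. if i = k div l \<and> l dvd k then g $ i else 0)"
    unfolding fps_compose_nth power_mult[symmetric]
    by (intro sum.cong refl) (use assms in \<open>auto simp: mult.commute\<close>)
  also have "\<dots> = (if l dvd k then g $ (k div l) else 0)"
    by (cases "l dvd k") (auto simp: div_le_dividend)
  finally show ?thesis .
qed

lemma Phi_X_0: "Phi l (fps_X * y) $ 0 = 0"
  by (simp add: Phi_def)

lemma compose_nth_1: "g $ 0 = 0 \<Longrightarrow> (g oo h) $ Suc 0 = g $ Suc 0 * h $ Suc 0"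
  by (simp add: fps_compose_nth)

lemma Phi_X_1: "Phi l (fps_X * y) $ 1 = 0"
  by (simp add: Phi_def compose_nth_1 PP_nth)

lemma Phi_mod_l: assumes "prime l"
  shows "cg (int l) (Phi l (fps_X * y)) (- SS l y)"
proof -
  have l0: "l > 0" using assms prime_gt_0_nat by blast
  have "cg (int l) (fps_const (int l) * (fps_X * y)) 0" by (rule cg_cmult)
  moreover have "cg (int l) ((fps_X * y) oo PP l) ((fps_X * y) oo fps_X ^ l)"
    by (rule cg_compose_right[OF cg_PP[OF assms]])
  moreover have "(fps_X * y) oo fps_X ^ l = SS l y"
    by (intro fps_ext) (auto simp: compose_Xpow_nth[OF l0] SS_def elim!: dvdE)
  ultimately have "cg (int l) (Phi l (fps_X * y)) (0 - SS l y)"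
    unfolding Phi_def by (metis cg_diff)
  then show ?thesis by simp
qed


definition shaped :: "nat \<Rightarrow> int fps \<Rightarrow> bool" where
  "shaped l a \<longleftrightarrow> (\<forall>k. (k < 2 \<or> l dvd k) \<longrightarrow> a $ k = 0)"

lemma cg_cmult_iff: "c \<noteq> 0 \<Longrightarrow> cg (c * d) (fps_const c * h) 0 \<longleftrightarrow> cg d h 0"
  unfolding cg_def by simp

lemma cg_factor: "cg c f 0 \<Longrightarrow> f = fps_const c * Abs_fps (\<lambda>k. f $ k div c)"
  unfolding cg_def by (intro fps_ext) simp

lemma U_base:
  assumes "prime l" "shaped l a" "cg (int l) (a + Phi l (fps_X * y)) 0"
  shows "cg (int l) a 0 \<and> cg (int l) y 0"
proof -
  have l0: "l > 0" using assms prime_gt_0_nat by blast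
  have "cg (int l) (a + Phi l (fps_X * y)) (a + - SS l y)"
    by (rule cg_add[OF cg_refl Phi_mod_l[OF assms(1)]])
  then have "cg (int l) (a - SS l y) 0" using assms(3) by (metis cg_sym cg_trans diff_conv_add_uminus)
  then have d: "int l dvd a $ k - SS l y $ k" for k unfolding cg_def by simp
  have "int l dvd a $ k" for k
  proof (cases "l dvd k")
    case True then show ?thesis using assms(2) unfolding shaped_def by simp
  next
    case False then show ?thesis using d[of k] by (simp add: SS_def)
  qed
  moreover have "int l dvd y $ j" for j
  proof -
    have "l dvd l * (j+1)" "l * (j+1) \<noteq> 0" "l * (j+1) div l - 1 = j" using l0 by auto
    then show ?thesis using d[of "l * (j+1)"] assms(2) unfolding shaped_def SS_def
      by (simp del: mult_Suc_right)
  qed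
  ultimately show ?thesis unfolding cg_def by simp
qed

lemma U_main:
  assumes "prime l"
  shows "shaped l a \<Longrightarrow> cg (int l ^ n) (a + Phi l (fps_X * y)) 0
           \<Longrightarrow> cg (int l ^ n) a 0 \<and> cg (int l ^ n) y 0"
proof (induction n arbitrary: a y)
  case 0 then show ?case by (simp add: cg_def)
next
  case (Suc n)
  have L0: "int l \<noteq> 0" using assms by auto
  have "cg (int l) (a + Phi l (fps_X * y)) 0" using Suc.prems(2) by (rule cg_dvd) simp
  then have b: "cg (int l) a 0" "cg (int l) y 0" using U_base[OF assms Suc.prems(1)] by auto
  define a' where "a' = Abs_fps (\<lambda>k. a $ k div int l)"
  define y' where "y' = Abs_fps (\<lambda>k. y $ k div int l)"
  have ea: "a = fps_const (int l) * a'" using cg_factor[OF b(1)] a'_def by simp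
  have ey: "y = fps_const (int l) * y'" using cg_factor[OF b(2)] y'_def by simp
  have sh: "shaped l a'" using Suc.prems(1) L0 unfolding shaped_def ea by simp
  have "a + Phi l (fps_X * y) = fps_const (int l) * (a' + Phi l (fps_X * y'))"
    unfolding ea ey by (simp add: Phi_cmult[symmetric] mult.left_commute distrib_left)
  then have "cg (int l ^ n) (a' + Phi l (fps_X * y')) 0"
    using Suc.prems(2) cg_cmult_iff[OF L0] by simp
  then have "cg (int l ^ n) a' 0 \<and> cg (int l ^ n) y' 0" using Suc.IH sh by blast
  then show ?case unfolding ea ey using cg_cmult_iff[OF L0] by simp
qed

lemma E_base:
  assumes "prime l" "f $ 0 = 0" "f $ 1 = 0"
  shows "\<exists>a y. shaped l a \<and> cg (int l) (f - a - Phi l (fps_X * y)) 0"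
proof -
  have l2: "l \<ge> 2" using assms prime_ge_2_nat by blast
  define a where "a = Abs_fps (\<lambda>k. if l dvd k \<or> k < 2 then 0 else f $ k)"
  define y where "y = Abs_fps (\<lambda>j. - f $ (l * (j + 1)))"
  have sh: "shaped l a" unfolding shaped_def a_def by simp
  have "f - a + SS l y = 0"
  proof (intro fps_ext)
    fix k
    show "(f - a + SS l y) $ k = 0 $ k"
    proof (cases "l dvd k")
      case True
      then obtain m where m: "k = l * m" by (auto elim: dvdE)
      show ?thesis
      proof (cases "m = 0")
        case True then show ?thesis using m assms by (simp add: a_def SS_def)
      next
        case False
        then have e: "l + l * (m - Suc 0) = l * m" using False by (cases m) auto
        then show ?thesis using m False l2 by (simp add: a_def SS_def y_def)
      qed
    next
      case False
      then have "k \<noteq> 0" by (metis dvd_0_right)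
      then show ?thesis using False assms by (cases "k = 1") (auto simp: a_def SS_def)
    qed
  qed
  then have z: "f $ k - a $ k + SS l y $ k = 0" for k
    by (metis fps_add_nth fps_sub_nth fps_zero_nth)
  have m: "int l dvd Phi l (fps_X * y) $ k - (- SS l y) $ k" for k
    using Phi_mod_l[OF assms(1), of y] unfolding cg_def by blast
  have "int l dvd (f - a - Phi l (fps_X * y)) $ k - 0 $ k" for k
  proof -
    have "(f - a - Phi l (fps_X * y)) $ k - 0 $ k = - (Phi l (fps_X * y) $ k - (- SS l y) $ k)"
      using z[of k] by simp
    then show ?thesis using m[of k] by (simp only: dvd_minus_iff)
  qed
  then show ?thesis using sh unfolding cg_def by blast
qed

lemma ag_rearr: "(f::'a::ab_group_add) - (a0 + a1) - (p0 + p1) = f - a0 - p0 - a1 - p1"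
  by (simp add: algebra_simps)

lemma E_main:
  assumes "prime l"
  shows "f $ 0 = 0 \<Longrightarrow> f $ 1 = 0 \<Longrightarrow>
     \<exists>a y. shaped l a \<and> cg (int l ^ n) (f - a - Phi l (fps_X * y)) 0"
proof (induction n arbitrary: f)
  case 0 then show ?case by (auto simp: cg_def shaped_def intro!: exI[of _ 0])
next
  case (Suc n)
  have L0: "int l \<noteq> 0" using assms by auto
  obtain a0 y0 where a0: "shaped l a0" and r: "cg (int l) (f - a0 - Phi l (fps_X * y0)) 0"
    using E_base[OF assms Suc.prems] by blast
  define f1 where "f1 = Abs_fps (\<lambda>k. (f - a0 - Phi l (fps_X * y0)) $ k div int l)"
  have ef: "f - a0 - Phi l (fps_X * y0) = fps_const (int l) * f1"
    using cg_factor[OF r] unfolding f1_def by metis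
  have "(fps_const (int l) * f1) $ 0 = 0" "(fps_const (int l) * f1) $ 1 = 0"
    unfolding ef[symmetric] using Suc.prems a0 Phi_X_0[of l y0] Phi_X_1[of l y0]
    by (auto simp: shaped_def)
  then have "f1 $ 0 = 0" "f1 $ 1 = 0" using L0 by auto
  then obtain a1 y1 where a1: "shaped l a1" and r1: "cg (int l ^ n) (f1 - a1 - Phi l (fps_X * y1)) 0"
    using Suc.IH by blast
  define a where "a = a0 + fps_const (int l) * a1"
  define y where "y = y0 + fps_const (int l) * y1"
  have sh: "shaped l a" using a0 a1 unfolding shaped_def a_def by simp
  have ey: "fps_X * y = fps_X * y0 + fps_const (int l) * (fps_X * y1)"
    unfolding y_def distrib_left by (simp only: mult.left_commute[of fps_X])
  have "f - a - Phi l (fps_X * y) = (f - a0 - Phi l (fps_X * y0)) - fps_const (int l) * a1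
            - Phi l (fps_const (int l) * (fps_X * y1))"
    unfolding ey Phi_add a_def by (rule ag_rearr)
  also have "\<dots> = fps_const (int l) * (f1 - a1 - Phi l (fps_X * y1))"
    unfolding ef Phi_cmult by (simp only: right_diff_distrib)
  finally have eq: "f - a - Phi l (fps_X * y) = fps_const (int l) * (f1 - a1 - Phi l (fps_X * y1))" .
  have pw: "int l ^ Suc n = int l * int l ^ n" by simp
  have "cg (int l ^ Suc n) (f - a - Phi l (fps_X * y)) 0"
    unfolding eq pw cg_cmult_iff[OF L0] by (rule r1)
  then show ?case using sh by blast
qed


lemma level_nth[simp]: "level x n $ k = x k n"
  by (simp add: level_def)

lemma level_of_levels: "cg (int l ^ n) (level (of_levels l F) n) (F n)"
  unfolding cg_def level_def of_levels_def by (simp add: mod_eq_dvd_iff[symmetric])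

lemma of_levels_eq: "(\<And>n. cg (int l ^ n) (F n) (G n)) \<Longrightarrow> of_levels l F = of_levels l G"
  unfolding cg_def of_levels_def by (intro ext) (simp add: mod_eq_dvd_iff)

lemma of_levels_in:
  assumes "l > 0" "\<And>n. cg (int l ^ n) (F (Suc n)) (F n)"
  shows "of_levels l F \<in> lam_set l"
  unfolding lam_set_def zl_set_def of_levels_def
proof (intro allI CollectI conjI)
  fix k n
  have q: "int l ^ n > 0" using assms by simp
  show "0 \<le> F n $ k mod int l ^ n" "F n $ k mod int l ^ n < int l ^ n" using q by auto
  have "int l ^ n dvd int l ^ Suc n" by simp
  then have "F (Suc n) $ k mod int l ^ Suc n mod int l ^ n = F (Suc n) $ k mod int l ^ n"
    by (rule mod_mod_cancel)
  also have "\<dots> = F n $ k mod int l ^ n" using assms(2)[of n] unfolding cg_def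
    by (simp add: mod_eq_dvd_iff)
  finally show "F (Suc n) $ k mod int l ^ Suc n mod int l ^ n = F n $ k mod int l ^ n" .
qed

lemma level_compat: "x \<in> lam_set l \<Longrightarrow> cg (int l ^ n) (level x (Suc n)) (level x n)"
  unfolding cg_def lam_set_def zl_set_def
proof (intro allI)
  fix k assume a: "x \<in> {x. \<forall>k. x k \<in> {a. \<forall>n. 0 \<le> a n \<and> a n < int l ^ n \<and> a (Suc n) mod int l ^ n = a n}}"
  then have "x k (Suc n) mod int l ^ n = x k n mod int l ^ n" by auto
  then show "int l ^ n dvd level x (Suc n) $ k - level x n $ k" by (simp add: mod_eq_dvd_iff)
qed

lemma cg_zero_lam:
  assumes "x \<in> lam_set l" "\<And>n. cg (int l ^ n) (level x n) 0"
  shows "x = lam_zero"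
proof (intro ext)
  fix k n
  have r: "0 \<le> x k n" "x k n < int l ^ n" using assms(1) unfolding lam_set_def zl_set_def by auto
  have "int l ^ n dvd x k n" using assms(2)[of n] unfolding cg_def by simp
  then have "x k n mod int l ^ n = 0" by simp
  moreover have "x k n mod int l ^ n = x k n" using r by simp
  ultimately show "x k n = lam_zero k n" by (simp add: lam_zero_def)
qed

lemma lmp_eq: "lam_l_minus_psi l x = of_levels l (\<lambda>n. Phi l (level x n))"
  unfolding lam_l_minus_psi_def Phi_def PP_def ..

lemma level_mul: "cg (int l ^ n) (level (lam_mul l x y) n) (level x n * level y n)"
  unfolding lam_mul_def by (rule level_of_levels)
lemma level_add: "cg (int l ^ n) (level (lam_add l x y) n) (level x n + level y n)"
  unfolding lam_add_def by (rule level_of_levels)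
lemma level_T: "cg (int l ^ n) (level (lam_T l) n) fps_X"
  unfolding lam_T_def using level_of_levels[of l n "\<lambda>n. fps_X"] by simp
lemma level_lmp: "cg (int l ^ n) (level (lam_l_minus_psi l x) n) (Phi l (level x n))"
  unfolding lmp_eq by (rule level_of_levels)

lemma level_lmpT: "cg (int l ^ n) (level (lam_l_minus_psi l (lam_mul l (lam_T l) y)) n)
   (Phi l (fps_X * level y n))"
  by (meson cg_trans level_lmp cg_Phi level_mul cg_mult level_T cg_refl)

lemma level_TT: "cg (int l ^ n) (level (lam_mul l (lam_mul l (lam_T l) (lam_T l)) z) n)
   (fps_X * fps_X * level z n)"
  by (meson cg_trans level_mul cg_mult level_T cg_refl)

lemma X2_shift: "(h::int fps) $ 0 = 0 \<Longrightarrow> h $ 1 = 0 \<Longrightarrow> fps_X * fps_X * fps_shift 2 h = h"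
proof (intro fps_ext)
  fix k assume "h $ 0 = 0" "h $ 1 = 0"
  have e: "fps_X * fps_X * fps_shift 2 h = fps_X * (fps_X * fps_shift 2 h)" by (rule mult.assoc)
  show "(fps_X * fps_X * fps_shift 2 h) $ k = h $ k"
    unfolding e fps_X_mult_nth using \<open>h $ 0 = 0\<close> \<open>h $ 1 = 0\<close>
    by (cases k; cases "k - 1") (simp_all add: numeral_2_eq_2)
qed

lemma cg_diff0: "cg c (a - b) 0 \<longleftrightarrow> cg c a b" unfolding cg_def by simp


lemma part1:
  assumes "prime l" "z \<in> lam_set l"
  shows "lam_mul l (lam_mul l (lam_T l) (lam_T l)) z
     \<in> {lam_add l a b | a b. a \<in> Xi l 2 \<and> b \<in> LpsiTLam l}"
proof -
  have l0: "l > 0" using assms prime_gt_0_nat by blast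
  define f where "f n = fps_X * fps_X * level z n" for n
  have f01: "f n $ 0 = 0" "f n $ 1 = 0" for n unfolding f_def by auto
  have "\<forall>n. \<exists>p. shaped l (fst p) \<and> cg (int l ^ n) (f n - fst p - Phi l (fps_X * snd p)) 0"
    using E_main[OF assms(1) f01] by auto
  then obtain p where p: "\<And>n. shaped l (fst (p n)) \<and> cg (int l ^ n) (f n - fst (p n) - Phi l (fps_X * snd (p n))) 0"
    by metis
  define A where "A n = fst (p n)" for n
  define Y where "Y n = snd (p n)" for n
  have shA: "shaped l (A n)" for n using p A_def by simp
  have hA: "cg (int l ^ n) (f n - A n - Phi l (fps_X * Y n)) 0" for n using p A_def Y_def by simp
  have compat: "cg (int l ^ n) (A (Suc n)) (A n) \<and> cg (int l ^ n) (Y (Suc n)) (Y n)" for n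
  proof -
    have fc: "cg (int l ^ n) (f (Suc n) - f n) 0"
      unfolding f_def cg_diff0 by (rule cg_mult[OF cg_refl level_compat[OF assms(2)]])
    have h1: "cg (int l ^ n) (f (Suc n) - A (Suc n) - Phi l (fps_X * Y (Suc n))) 0"
      by (rule cg_dvd[OF hA]) simp
    have E: "(A (Suc n) - A n) + Phi l (fps_X * (Y (Suc n) - Y n)) =
       (f (Suc n) - f n) - (f (Suc n) - A (Suc n) - Phi l (fps_X * Y (Suc n)))
         + (f n - A n - Phi l (fps_X * Y n))"
      by (simp add: right_diff_distrib Phi_diff algebra_simps)
    have C: "cg (int l ^ n) ((f (Suc n) - f n) - (f (Suc n) - A (Suc n) - Phi l (fps_X * Y (Suc n)))
         + (f n - A n - Phi l (fps_X * Y n))) (0 - 0 + 0)"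
      by (intro cg_add cg_diff fc h1 hA)
    have "cg (int l ^ n) ((A (Suc n) - A n) + Phi l (fps_X * (Y (Suc n) - Y n))) 0"
      using C by (simp only: E diff_self add_0_right)
    moreover have "shaped l (A (Suc n) - A n)" using shA unfolding shaped_def by simp
    ultimately have "cg (int l ^ n) (A (Suc n) - A n) 0 \<and> cg (int l ^ n) (Y (Suc n) - Y n) 0"
      using U_main[OF assms(1)] by blast
    then show ?thesis unfolding cg_diff0 .
  qed
  define Al where "Al = of_levels l A"
  define Yl where "Yl = of_levels l Y"
  have Al: "Al \<in> Xi l 2"
  proof -
    have "Al \<in> lam_set l" unfolding Al_def using of_levels_in[OF l0] compat by blast
    moreover have "Al k = (\<lambda>n. 0)" if "k < 2 \<or> l dvd k" for k
      using shA that unfolding Al_def of_levels_def shaped_def by auto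
    ultimately show ?thesis unfolding Xi_def by auto
  qed
  have Yl: "Yl \<in> lam_set l" unfolding Yl_def using of_levels_in[OF l0] compat by blast
  define b where "b = lam_l_minus_psi l (lam_mul l (lam_T l) Yl)"
  have b: "b \<in> LpsiTLam l" unfolding LpsiTLam_def b_def using Yl by blast
  have "lam_mul l (lam_mul l (lam_T l) (lam_T l)) z = lam_add l Al b"
    unfolding lam_add_def lam_mul_def[of l "lam_mul l (lam_T l) (lam_T l)" z]
  proof (rule of_levels_eq)
    fix n
    have e1: "cg (int l ^ n) (level (lam_mul l (lam_T l) (lam_T l)) n * level z n) (f n)"
      unfolding f_def by (intro cg_mult level_mul[THEN cg_trans] cg_refl level_T)
    have e2: "cg (int l ^ n) (f n) (A n + Phi l (fps_X * Y n))"
      using hA[of n] unfolding cg_def by (simp add: algebra_simps)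
    have e3: "cg (int l ^ n) (level Al n + level b n) (A n + Phi l (fps_X * Y n))"
      unfolding Al_def b_def
      by (intro cg_add level_of_levels level_lmpT[THEN cg_trans] cg_Phi cg_mult cg_refl)
        (simp add: Yl_def level_of_levels)
    show "cg (int l ^ n) (level (lam_mul l (lam_T l) (lam_T l)) n * level z n) (level Al n + level b n)"
      by (rule cg_trans[OF cg_trans[OF e1 e2] cg_sym[OF e3]])
  qed
  then show ?thesis using Al b by blast
qed


lemma part2:
  assumes "prime l" "a \<in> Xi l 2" "y \<in> lam_set l"
  shows "lam_add l a (lam_l_minus_psi l (lam_mul l (lam_T l) y)) \<in> T2Lam l"
proof -
  have l0: "l > 0" using assms prime_gt_0_nat by blast
  have aL: "a \<in> lam_set l" and a0: "\<And>k. k < 2 \<Longrightarrow> a k = (\<lambda>n. 0)"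
    using assms(2) unfolding Xi_def by auto
  define b where "b = lam_l_minus_psi l (lam_mul l (lam_T l) y)"
  define h where "h n = level a n + Phi l (fps_X * level y n)" for n
  have h01: "h n $ 0 = 0" "h n $ 1 = 0" for n
    unfolding h_def using a0[of 0] a0[of 1] Phi_X_0 Phi_X_1 by auto
  have hc: "cg (int l ^ n) (h (Suc n)) (h n)" for n
    unfolding h_def by (intro cg_add cg_Phi cg_mult cg_refl level_compat aL assms(3))
  define z where "z = of_levels l (\<lambda>n. fps_shift 2 (h n))"
  have z: "z \<in> lam_set l" unfolding z_def by (intro of_levels_in l0 cg_shift hc)
  have "lam_mul l (lam_mul l (lam_T l) (lam_T l)) z = lam_add l a b"
    unfolding lam_add_def lam_mul_def[of l "lam_mul l (lam_T l) (lam_T l)" z]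
  proof (rule of_levels_eq)
    fix n
    have e1: "cg (int l ^ n) (level (lam_mul l (lam_T l) (lam_T l)) n * level z n)
        (fps_X * fps_X * fps_shift 2 (h n))"
      unfolding z_def by (intro cg_mult level_mul[THEN cg_trans] cg_refl level_T level_of_levels)
    have e2: "cg (int l ^ n) (level a n + level b n) (h n)"
      unfolding h_def b_def by (intro cg_add cg_refl level_lmpT)
    show "cg (int l ^ n) (level (lam_mul l (lam_T l) (lam_T l)) n * level z n) (level a n + level b n)"
      using cg_trans[OF e1[unfolded X2_shift[OF h01]] cg_sym[OF e2]] .
  qed
  then have "lam_add l a b \<in> T2Lam l" unfolding T2Lam_def
    using z by (metis (mono_tags, lifting) mem_Collect_eq)
  then show ?thesis by (simp add: b_def)
qed

lemma cg_negadd: "cg c a b \<Longrightarrow> cg c (- a + b) 0"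
  unfolding cg_def by (simp add: dvd_diff_commute)

lemma part3:
  assumes "prime l" "x \<in> Xi l 2" "x \<in> LpsiTLam l"
  shows "x = lam_zero"
proof -
  obtain y where y: "y \<in> lam_set l" and xe: "x = lam_l_minus_psi l (lam_mul l (lam_T l) y)"
    using assms(3) unfolding LpsiTLam_def by blast
  have xL: "x \<in> lam_set l" and x0: "\<And>k. k < 2 \<or> l dvd k \<Longrightarrow> x k = (\<lambda>n. 0)"
    using assms(2) unfolding Xi_def by auto
  show ?thesis
  proof (rule cg_zero_lam[OF xL])
    fix n
    have sh: "shaped l (- level x n)" using x0 unfolding shaped_def by simp
    have "cg (int l ^ n) (level x n) (Phi l (fps_X * level y n))"
      unfolding xe by (rule level_lmpT)
    then have "cg (int l ^ n) (- level x n + Phi l (fps_X * level y n)) 0"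
      by (rule cg_negadd)
    then have "cg (int l ^ n) (- level x n) 0" using U_main[OF assms(1) sh] by blast
    then show "cg (int l ^ n) (level x n) 0" unfolding cg_def by simp
  qed
qed

lemma zero_in: "l > 0 \<Longrightarrow> lam_zero \<in> Xi l 2 \<inter> LpsiTLam l"
proof -
  assume l0: "l > 0"
  have z: "lam_zero \<in> lam_set l" unfolding lam_set_def zl_set_def lam_zero_def using l0 by simp
  have lz: "level lam_zero n = 0" for n by (intro fps_ext) (simp add: lam_zero_def)
  have e: "lam_zero = of_levels l (\<lambda>n. 0)" unfolding lam_zero_def of_levels_def by simp
  have "lam_l_minus_psi l (lam_mul l (lam_T l) lam_zero) = lam_zero"
    unfolding e lmp_eq
  proof (rule of_levels_eq)
    fix n
    show "cg (int l ^ n) (Phi l (level (lam_mul l (lam_T l) (of_levels l (\<lambda>n. 0))) n)) 0"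
    proof -
      have "cg (int l ^ n) (level (lam_mul l (lam_T l) lam_zero) n) 0"
        using level_mul[of l n "lam_T l" lam_zero] by (simp add: lz)
      from cg_Phi[OF this, of l] show ?thesis unfolding e[symmetric] by simp
    qed
  qed
  then have "lam_zero \<in> LpsiTLam l" unfolding LpsiTLam_def
    using z by (metis (mono_tags, lifting) mem_Collect_eq)
  moreover have "lam_zero \<in> Xi l 2" unfolding Xi_def using z by (simp add: lam_zero_def)
  ultimately show ?thesis by blast
qed

theorem mainTheorem7:
  fixes l :: nat
  assumes "prime l" and "odd l"
  shows "T2Lam l = {lam_add l a b | a b. a \<in> Xi l 2 \<and> b \<in> LpsiTLam l}
         \<and> Xi l 2 \<inter> LpsiTLam l = {lam_zero}"
proof (intro conjI)
  show "T2Lam l = {lam_add l a b | a b. a \<in> Xi l 2 \<and> b \<in> LpsiTLam l}"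
  proof (intro equalityI subsetI)
    fix t assume "t \<in> T2Lam l"
    then obtain z where "z \<in> lam_set l" "t = lam_mul l (lam_mul l (lam_T l) (lam_T l)) z"
      unfolding T2Lam_def by auto
    then show "t \<in> {lam_add l a b | a b. a \<in> Xi l 2 \<and> b \<in> LpsiTLam l}"
      using part1[OF assms(1)] by simp
  next
    fix t assume "t \<in> {lam_add l a b | a b. a \<in> Xi l 2 \<and> b \<in> LpsiTLam l}"
    then obtain a b where ab: "t = lam_add l a b" "a \<in> Xi l 2" "b \<in> LpsiTLam l" by auto
    then obtain y where "y \<in> lam_set l" "b = lam_l_minus_psi l (lam_mul l (lam_T l) y)"
      unfolding LpsiTLam_def by auto
    then show "t \<in> T2Lam l" using part2[OF assms(1) ab(2)] ab(1) by simp
  qed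
  show "Xi l 2 \<inter> LpsiTLam l = {lam_zero}"
  proof (intro equalityI subsetI)
    fix x assume "x \<in> Xi l 2 \<inter> LpsiTLam l"
    then show "x \<in> {lam_zero}" using part3[OF assms(1)] by simp
  next
    fix x assume "x \<in> {lam_zero}"
    then show "x \<in> Xi l 2 \<inter> LpsiTLam l" using zero_in[OF prime_gt_0_nat[OF assms(1)]] by simp
  qed
qed

end
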